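(* Let $(V,E,W)$ and $(\tilde V,\tilde E,\tilde W)$ be finite connected weighted graphs with shortest-path metrics $d_E$ and $d_{\tilde E}$, let $f:V\to\tilde V$ be any map, and let $\mathcal{F}$ be a universal approximator. Fix enumerations of $V$ and $\tilde V$. For every $\epsilon>0$ there is $\hat f\in\bigcup_{c\in\mathbb{N}_+}\mathcal{F}_{\#V,\#\tilde V,c}$ such that the map $\hat T:V\to\mathcal{P}(\tilde V)$, $$\hat T(x)=\sum_{u\in\tilde V}\Big[P_{\Delta_{\#\tilde V}}\circ\hat f\big((d_E(x,v))_{v\in V}\big)\Big]_u\,\delta_u,$$ satisfies $\max_{x\in V}W_1\big(\hat T(x),\delta_{f(x)}\big)<\epsilon$, where $W_1$ is the 1-Wasserstein distance on probability measures on $(\tilde V,d_{\tilde E})$.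
   Context: A weighted graph $(V,E,W)$ has edge weights $W:E\to(0,\infty)$; it is connected if any two vertices are joined by a path, and $d_E(u,v)$ is the minimum over paths $u=v_1,\dots,v_T=v$ of $\sum_tW(\{v_t,v_{t+1}\})$. $\Delta_k$ is the standard simplex in $\mathbb{R}^k$ and $P_{\Delta_k}$ the Euclidean orthogonal projection onto it. A universal approximator is a family $\mathcal{F}=\{\mathcal{F}_{n,m,c}\}$, with $\mathcal{F}_{n,m,c}$ nested in $c$ sets of maps $\mathbb{R}^n\to\mathbb{R}^m$, together with a rate function $r(\omega,K,n,m,c)$ decreasing to $0$ in $c$, such that for every uniformly continuous $f:\mathbb{R}^n\to\mathbb{R}^m$ with continuous modulus $\omega$ and every compact $K$, some $\hat f\in\mathcal{F}_{n,m,c}$ satisfies $\sup_K\|f-\hat f\|\le r(\omega,K,n,m,c)$. *)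

theory Defs
  imports "HOL-Analysis.Analysis"
begin

definition weighted_graph :: "'a set \<Rightarrow> 'a set set \<Rightarrow> ('a set \<Rightarrow> real) \<Rightarrow> bool" where
  "weighted_graph V E W \<longleftrightarrow>
     (\<forall>e\<in>E. \<exists>u v. u \<in> V \<and> v \<in> V \<and> u \<noteq> v \<and> e = {u, v}) \<and> (\<forall>e\<in>E. W e > 0)"

definition is_path :: "'a set \<Rightarrow> 'a set set \<Rightarrow> 'a \<Rightarrow> 'a \<Rightarrow> 'a list \<Rightarrow> bool" where
  "is_path V E u v p \<longleftrightarrow> p \<noteq> [] \<and> hd p = u \<and> last p = v \<and> set p \<subseteq> V \<and>
     (\<forall>t. Suc t < length p \<longrightarrow> {p ! t, p ! Suc t} \<in> E)"

definition path_weight :: "('a set \<Rightarrow> real) \<Rightarrow> 'a list \<Rightarrow> real" where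
  "path_weight W p = (\<Sum>t<length p - 1. W {p ! t, p ! Suc t})"

definition graph_connected :: "'a set \<Rightarrow> 'a set set \<Rightarrow> bool" where
  "graph_connected V E \<longleftrightarrow> (\<forall>u\<in>V. \<forall>v\<in>V. \<exists>p. is_path V E u v p)"

definition graph_dist :: "'a set \<Rightarrow> 'a set set \<Rightarrow> ('a set \<Rightarrow> real) \<Rightarrow> 'a \<Rightarrow> 'a \<Rightarrow> real" where
  "graph_dist V E W u v = Inf {path_weight W p | p. is_path V E u v p}"

definition rvec :: "nat \<Rightarrow> (nat \<Rightarrow> real) set" where
  "rvec n = {x. \<forall>i\<ge>n. x i = 0}"

definition enorm :: "nat \<Rightarrow> (nat \<Rightarrow> real) \<Rightarrow> real" where
  "enorm n x = sqrt (\<Sum>i<n. (x i)\<^sup>2)"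

definition std_simplex :: "nat \<Rightarrow> (nat \<Rightarrow> real) set" where
  "std_simplex k = {y \<in> rvec k. (\<forall>i<k. 0 \<le> y i) \<and> (\<Sum>i<k. y i) = 1}"

definition proj_simplex :: "nat \<Rightarrow> (nat \<Rightarrow> real) \<Rightarrow> (nat \<Rightarrow> real)" where
  "proj_simplex k z = (THE y. y \<in> std_simplex k \<and>
      (\<forall>y'\<in>std_simplex k. enorm k (z - y) \<le> enorm k (z - y')))"

definition cont_modulus :: "(real \<Rightarrow> real) \<Rightarrow> bool" where
  "cont_modulus \<omega> \<longleftrightarrow> \<omega> 0 = 0 \<and> (\<forall>t\<ge>0. 0 \<le> \<omega> t) \<and> continuous_on {0..} \<omega>"

definition has_modulus :: "nat \<Rightarrow> nat \<Rightarrow> (real \<Rightarrow> real) \<Rightarrow> ((nat \<Rightarrow> real) \<Rightarrow> (nat \<Rightarrow> real)) \<Rightarrow> bool" where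
  "has_modulus n m \<omega> f \<longleftrightarrow>
     (\<forall>x\<in>rvec n. \<forall>y\<in>rvec n. enorm m (f x - f y) \<le> \<omega> (enorm n (x - y)))"

definition universal_approximator ::
  "(nat \<Rightarrow> nat \<Rightarrow> nat \<Rightarrow> ((nat \<Rightarrow> real) \<Rightarrow> (nat \<Rightarrow> real)) set) \<Rightarrow>
   ((real \<Rightarrow> real) \<Rightarrow> (nat \<Rightarrow> real) set \<Rightarrow> nat \<Rightarrow> nat \<Rightarrow> nat \<Rightarrow> real) \<Rightarrow> bool" where
  "universal_approximator F r \<longleftrightarrow>
     (\<forall>n m c c'. c \<le> c' \<longrightarrow> F n m c \<subseteq> F n m c') \<and>
     (\<forall>\<omega> K n m. antimono (\<lambda>c. r \<omega> K n m c) \<and> (\<lambda>c. r \<omega> K n m c) \<longlonglongrightarrow> 0) \<and>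
     (\<forall>n m f \<omega> K c. cont_modulus \<omega> \<and> has_modulus n m \<omega> f \<and> K \<subseteq> rvec n \<and> compact K \<longrightarrow>
        (\<exists>fh\<in>F n m c. \<forall>x\<in>K. enorm m (f x - fh x) \<le> r \<omega> K n m c))"

text \<open>Measures on the finite set S are given by their mass functions.\<close>
definition wasserstein1 :: "'b set \<Rightarrow> ('b \<Rightarrow> 'b \<Rightarrow> real) \<Rightarrow> ('b \<Rightarrow> real) \<Rightarrow> ('b \<Rightarrow> real) \<Rightarrow> real" where
  "wasserstein1 S d \<mu> \<nu> = Inf {(\<Sum>u\<in>S. \<Sum>v\<in>S. \<pi> u v * d u v) | \<pi>.
       (\<forall>u\<in>S. \<forall>v\<in>S. 0 \<le> \<pi> u v) \<and>
       (\<forall>u\<in>S. (\<Sum>v\<in>S. \<pi> u v) = \<mu> u) \<and> (\<forall>v\<in>S. (\<Sum>u\<in>S. \<pi> u v) = \<nu> v)}"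

definition dirac_mass :: "'b \<Rightarrow> 'b \<Rightarrow> real" where
  "dirac_mass b = (\<lambda>u. if u = b then 1 else 0)"

end

theory Submission
  imports Defs
begin


lemma enorm_coord: "i < m \<Longrightarrow> \<bar>x i\<bar> \<le> enorm m x"
proof -
  assume "i < m"
  have "(x i)\<^sup>2 \<le> (\<Sum>k<m. (x k)\<^sup>2)"
    by (rule member_le_sum) (use \<open>i<m\<close> in auto)
  then have "sqrt ((x i)\<^sup>2) \<le> enorm m x" unfolding enorm_def by (rule real_sqrt_le_mono)
  then show ?thesis by simp
qed

lemma enorm_sym: "enorm m (a - b) = enorm m (b - a)"
  unfolding enorm_def by (simp add: power2_commute)

lemma compact_simplex: "compact (std_simplex m)"
proof -
  define K where "K = (\<lambda>i::nat. if i < m then {0..1::real} else {0})"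
  have cK: "compact (PiE UNIV K)"
  proof -
    have "compactin (product_topology (\<lambda>i. euclidean) UNIV) (PiE UNIV K)"
      unfolding compactin_PiE by (auto simp: K_def)
    then show ?thesis by (simp add: euclidean_product_topology compactin_euclidean_iff)
  qed
  have cl: "closed {y::nat\<Rightarrow>real. (\<Sum>i<m. y i) = 1}"
    by (rule closed_Collect_eq) (simp_all add: continuous_on_sum continuous_on_const)
  have eq: "std_simplex m = PiE UNIV K \<inter> {y. (\<Sum>i<m. y i) = 1}"
  proof (intro equalityI subsetI)
    fix y assume y: "y \<in> std_simplex m"
    have "y i \<le> 1" if "i < m" for i
    proof -
      have "y i \<le> (\<Sum>k<m. y k)" by (rule member_le_sum) (use y that in \<open>auto simp: std_simplex_def\<close>)
      then show ?thesis using y by (simp add: std_simplex_def)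
    qed
    then show "y \<in> PiE UNIV K \<inter> {y. (\<Sum>i<m. y i) = 1}"
      using y by (auto simp: std_simplex_def rvec_def K_def PiE_def)
  next
    fix y assume "y \<in> PiE UNIV K \<inter> {y. (\<Sum>i<m. y i) = 1}"
    then show "y \<in> std_simplex m"
    proof -
      assume a: "y \<in> PiE UNIV K \<inter> {y. (\<Sum>i<m. y i) = 1}"
      then have yk: "y i \<in> K i" for i by (auto simp: PiE_def Pi_def)
      have "y i = 0" if "i \<ge> m" for i using yk[of i] that by (simp add: K_def)
      moreover have "0 \<le> y i" if "i < m" for i using yk[of i] that by (simp add: K_def)
      ultimately show ?thesis using a by (simp add: std_simplex_def rvec_def)
    qed
  qed
  show ?thesis unfolding eq by (rule compact_Int_closed[OF cK cl])
qed

lemma proj_simplex_prop: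
  assumes m: "m \<ge> 1"
  shows "proj_simplex m z \<in> std_simplex m \<and>
    (\<forall>y'\<in>std_simplex m. enorm m (z - proj_simplex m z) \<le> enorm m (z - y'))"
proof -
  define S where "S = std_simplex m"
  define h where "h = (\<lambda>y::nat\<Rightarrow>real. \<Sum>i<m. (z i - y i)\<^sup>2)"
  have en: "enorm m (z - y) = sqrt (h y)" for y by (simp add: enorm_def h_def)
  have "(\<lambda>i. if i = 0 then 1 else 0) \<in> S" using m
    by (auto simp: S_def std_simplex_def rvec_def)
  then have ne: "S \<noteq> {}" by auto
  have ch: "continuous_on S h" unfolding h_def
    by (intro continuous_on_sum continuous_on_power continuous_on_diff continuous_on_const)
       (auto intro: continuous_on_subset[OF continuous_on_product_coordinates])
  obtain y0 where y0: "y0 \<in> S" "\<And>y. y \<in> S \<Longrightarrow> h y0 \<le> h y"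
    using continuous_attains_inf[OF compact_simplex[of m, folded S_def] ne ch] by blast
  have ex: "y0 \<in> S \<and> (\<forall>y'\<in>S. enorm m (z - y0) \<le> enorm m (z - y'))"
    using y0 by (auto simp: en)
  have uniq: "y1 = y0" if y1: "y1 \<in> S" "\<forall>y'\<in>S. enorm m (z - y1) \<le> enorm m (z - y')" for y1
  proof -
    have h1: "h y1 \<le> h y" if "y \<in> S" for y using y1(2) that by (auto simp: en)
    have "h y1 = h y0" using h1[OF y0(1)] y0(2)[OF y1(1)] by simp
    define ym where "ym = (\<lambda>i. (y0 i + y1 i) / 2)"
    have "ym \<in> S" using y0(1) y1(1)
      by (auto simp: S_def std_simplex_def rvec_def ym_def sum.distrib sum_divide_distrib[symmetric])
    then have "h y1 \<le> h ym" by (rule h1)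
    moreover have "h ym = (h y0 + h y1) / 2 - (\<Sum>i<m. (y0 i - y1 i)\<^sup>2) / 4"
    proof -
      have "(\<Sum>i<m. (z i - (y0 i + y1 i) / 2)\<^sup>2) =
        (\<Sum>i<m. ((z i - y0 i)\<^sup>2 + (z i - y1 i)\<^sup>2) / 2 - (y0 i - y1 i)\<^sup>2 / 4)"
        by (rule sum.cong) (simp_all add: field_simps power2_eq_square)
      also have "\<dots> = (\<Sum>i<m. (z i - y0 i)\<^sup>2 + (z i - y1 i)\<^sup>2) / 2 - (\<Sum>i<m. (y0 i - y1 i)\<^sup>2) / 4"
        by (simp add: sum_subtractf sum_divide_distrib)
      finally show ?thesis unfolding h_def ym_def by (simp only: sum.distrib)
    qed
    ultimately have "(\<Sum>i<m. (y0 i - y1 i)\<^sup>2) \<le> 0" using \<open>h y1 = h y0\<close> by (simp add: field_simps)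
    then have "(\<Sum>i<m. (y0 i - y1 i)\<^sup>2) = 0" using sum_nonneg[of "{..<m}" "\<lambda>i. (y0 i - y1 i)\<^sup>2"] by simp
    then have "\<forall>i\<in>{..<m}. (y0 i - y1 i)\<^sup>2 = 0" by (subst (asm) sum_nonneg_eq_0_iff) auto
    then have "y0 i = y1 i" for i using y0(1) y1(1)
      by (cases "i < m") (auto simp: S_def std_simplex_def rvec_def)
    then show ?thesis by auto
  qed
  have "proj_simplex m z \<in> S \<and> (\<forall>y'\<in>S. enorm m (z - proj_simplex m z) \<le> enorm m (z - y'))"
    unfolding proj_simplex_def S_def[symmetric]
    using theI[where a=y0 and P="\<lambda>y. y \<in> S \<and> (\<forall>y'\<in>S. enorm m (z - y) \<le> enorm m (z - y'))"] ex uniq by blast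
  then show ?thesis by (simp add: S_def)
qed



lemma pw_nonneg:
  assumes "weighted_graph V E W" "is_path V E u v p"
  shows "0 \<le> path_weight W p"
  unfolding path_weight_def
proof (rule sum_nonneg)
  fix t assume "t \<in> {..<length p - 1}"
  then have "{p ! t, p ! Suc t} \<in> E" using assms(2) by (auto simp: is_path_def)
  then show "0 \<le> W {p ! t, p ! Suc t}" using assms(1) by (auto simp: weighted_graph_def less_imp_le)
qed

lemma gd_nonneg:
  assumes "weighted_graph V E W" "graph_connected V E" "u \<in> V" "v \<in> V"
  shows "0 \<le> graph_dist V E W u v"
  unfolding graph_dist_def
proof (rule cInf_greatest)
  obtain p where "is_path V E u v p" using assms(2-4) by (auto simp: graph_connected_def)
  then show "{path_weight W p |p. is_path V E u v p} \<noteq> {}" by auto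
next
  fix x assume "x \<in> {path_weight W p |p. is_path V E u v p}"
  then show "0 \<le> x" using pw_nonneg[OF assms(1)] by auto
qed

lemma gd_refl:
  assumes "weighted_graph V E W" "graph_connected V E" "v \<in> V"
  shows "graph_dist V E W v v = 0"
proof (rule antisym)
  have p: "is_path V E v v [v]" using assms(3) by (auto simp: is_path_def)
  have "path_weight W [v] = 0" by (simp add: path_weight_def)
  then have m: "0 \<in> {path_weight W p |p. is_path V E v v p}" using p by force
  have "bdd_below {path_weight W p |p. is_path V E v v p}"
    using pw_nonneg[OF assms(1)] by (auto intro!: bdd_belowI[where m=0])
  then show "graph_dist V E W v v \<le> 0" unfolding graph_dist_def using m by (rule cInf_lower[rotated])
  show "0 \<le> graph_dist V E W v v" by (rule gd_nonneg[OF assms(1,2,3,3)])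
qed

lemma gd_pos:
  assumes "weighted_graph V E W" "graph_connected V E" "u \<in> V" "v \<in> V" "u \<noteq> v"
    and w: "\<forall>e\<in>E. w \<le> W e"
  shows "w \<le> graph_dist V E W u v"
  unfolding graph_dist_def
proof (rule cInf_greatest)
  obtain p where "is_path V E u v p" using assms(2-4) by (auto simp: graph_connected_def)
  then show "{path_weight W p |p. is_path V E u v p} \<noteq> {}" by auto
next
  fix x assume "x \<in> {path_weight W p |p. is_path V E u v p}"
  then obtain p where p: "is_path V E u v p" and x: "x = path_weight W p" by auto
  have "length p \<noteq> 1"
  proof
    assume "length p = 1"
    then obtain a where "p = [a]" by (cases p) auto
    then show False using p assms(5) by (auto simp: is_path_def)
  qed
  moreover have "length p \<noteq> 0" using p by (auto simp: is_path_def)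
  ultimately have l: "length p \<ge> 2" by linarith
  then have e: "{p ! 0, p ! Suc 0} \<in> E" using p by (auto simp: is_path_def)
  have "W {p ! 0, p ! Suc 0} = (\<Sum>t\<in>{0}. W {p ! t, p ! Suc t})" by simp
  also have "\<dots> \<le> (\<Sum>t<length p - 1. W {p ! t, p ! Suc t})"
  proof (rule sum_mono2)
    show "{0} \<subseteq> {..<length p - 1}" using l by simp
    fix t assume "t \<in> {..<length p - 1} - {0}"
    then have "{p ! t, p ! Suc t} \<in> E" using p by (auto simp: is_path_def)
    then show "0 \<le> W {p ! t, p ! Suc t}" using assms(1) by (auto simp: weighted_graph_def less_imp_le)
  qed simp
  finally have "W {p ! 0, p ! Suc 0} \<le> path_weight W p" by (simp add: path_weight_def)
  then show "w \<le> x" using w e x by force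
qed

lemma min_weight:
  assumes "finite V" "weighted_graph V E W"
  shows "\<exists>w>0. \<forall>e\<in>E. w \<le> W e"
proof -
  have "E \<subseteq> Pow V" using assms(2) by (auto simp: weighted_graph_def)
  then have fE: "finite E" using assms(1) by (meson finite_Pow_iff finite_subset)
  define w where "w = Min (insert 1 (W ` E))"
  have fin: "finite (insert 1 (W ` E))" using fE by simp
  have "\<forall>a\<in>insert 1 (W ` E). 0 < a" using assms(2) by (auto simp: weighted_graph_def)
  then have "w > 0" unfolding w_def using Min_gr_iff[OF fin] by blast
  moreover have "\<forall>e\<in>E. w \<le> W e" unfolding w_def using Min_le[OF fin] by blast
  ultimately show ?thesis by (intro exI[of _ w]) simp
qed


lemma b_lip: assumes "(w::real) > 0"
  shows "\<bar>max 0 (1 - \<bar>s\<bar>/w) - max 0 (1 - \<bar>t\<bar>/w)\<bar> \<le> \<bar>s - t\<bar>/w"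
proof -
  have "\<bar>\<bar>s\<bar>/w - \<bar>t\<bar>/w\<bar> = \<bar>\<bar>s\<bar> - \<bar>t\<bar>\<bar>/w" using assms by (simp add: diff_divide_distrib[symmetric])
  also have "\<dots> \<le> \<bar>s - t\<bar>/w" using assms by (intro divide_right_mono abs_triangle_ineq3) auto
  finally have "\<bar>\<bar>s\<bar>/w - \<bar>t\<bar>/w\<bar> \<le> \<bar>s - t\<bar>/w" .
  then show ?thesis by (simp add: max_def abs_le_iff) linarith?
qed

theorem mainTheorem11:
  fixes V :: "'a set" and E :: "'a set set" and W :: "'a set \<Rightarrow> real"
    and V' :: "'b set" and E' :: "'b set set" and W' :: "'b set \<Rightarrow> real"
    and f :: "'a \<Rightarrow> 'b"
    and F :: "nat \<Rightarrow> nat \<Rightarrow> nat \<Rightarrow> ((nat \<Rightarrow> real) \<Rightarrow> (nat \<Rightarrow> real)) set"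
    and r :: "(real \<Rightarrow> real) \<Rightarrow> (nat \<Rightarrow> real) set \<Rightarrow> nat \<Rightarrow> nat \<Rightarrow> nat \<Rightarrow> real"
    and enumV :: "nat \<Rightarrow> 'a" and enumV' :: "nat \<Rightarrow> 'b"
    and \<epsilon> :: real
  assumes "finite V" "weighted_graph V E W" "graph_connected V E"
    and "finite V'" "weighted_graph V' E' W'" "graph_connected V' E'"
    and "f ` V \<subseteq> V'"
    and "universal_approximator F r"
    and "bij_betw enumV {..<card V} V"
    and "bij_betw enumV' {..<card V'} V'"
    and "\<epsilon> > 0"
  shows "\<exists>c\<ge>1. \<exists>fh \<in> F (card V) (card V') c.
           \<forall>x\<in>V. wasserstein1 V' (graph_dist V' E' W')
              (\<lambda>u. proj_simplex (card V')
                     (fh (\<lambda>i. if i < card V then graph_dist V E W x (enumV i) else 0))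
                     (the_inv_into {..<card V'} enumV' u))
              (dirac_mass (f x)) < \<epsilon>"
proof -
  note fV = assms(1) and wg = assms(2) and cg = assms(3) and fV' = assms(4) and wg' = assms(5)
    and cg' = assms(6) and fVV' = assms(7) and UA = assms(8) and bV = assms(9) and bV' = assms(10)
    and eps = assms(11)
  define n where "n = card V"
  define m where "m = card V'"
  define ix where "ix = the_inv_into {..<n} enumV"
  define jx where "jx = the_inv_into {..<m} enumV'"
  define d where "d = graph_dist V E W"
  define d' where "d' = graph_dist V' E' W'"
  define X where "X = (\<lambda>y i. if i < n then d y (enumV i) else 0)"
  have injV: "inj_on enumV {..<n}" and imV: "enumV ` {..<n} = V" using bV by (auto simp: bij_betw_def n_def)
  have injV': "inj_on enumV' {..<m}" and imV': "enumV' ` {..<m} = V'" using bV' by (auto simp: bij_betw_def m_def)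
  have ix_lt: "ix x < n" if "x \<in> V" for x
    using the_inv_into_into[OF injV, of x "{..<n}"] that imV by (auto simp: ix_def)
  have ix_inv: "enumV (ix x) = x" if "x \<in> V" for x
    using f_the_inv_into_f[OF injV, of x] that imV by (auto simp: ix_def)
  have jx_lt: "jx u < m" if "u \<in> V'" for u
    using the_inv_into_into[OF injV', of u "{..<m}"] that imV' by (auto simp: jx_def)
  have jx_inv: "enumV' (jx u) = u" if "u \<in> V'" for u
    using f_the_inv_into_f[OF injV', of u] that imV' by (auto simp: jx_def)
  have jx_enum: "jx (enumV' i) = i" if "i < m" for i
    using the_inv_into_f_f[OF injV', of i] that by (auto simp: jx_def)
  obtain w where w0: "w > 0" and wle: "\<forall>e\<in>E. w \<le> W e" using min_weight[OF fV wg] by blast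
  define b where "b = (\<lambda>s::real. max 0 (1 - \<bar>s\<bar>/w))"
  define g where "g = (\<lambda>(z::nat\<Rightarrow>real) j. \<Sum>x\<in>V. if jx (f x) = j then b (z (ix x)) else 0)"
  define L where "L = real m * real n / w"
  define \<omega> where "\<omega> = (\<lambda>t::real. L * t)"
  have L0: "L \<ge> 0" using w0 by (simp add: L_def)
  have cm: "cont_modulus \<omega>" unfolding cont_modulus_def \<omega>_def using L0
    by (auto intro!: continuous_intros)
  have hm: "has_modulus n m \<omega> g"
    unfolding has_modulus_def
  proof (intro ballI)
    fix z z' :: "nat \<Rightarrow> real"
    define a where "a = enorm n (z - z')"
    have coord: "\<bar>b (z (ix x)) - b (z' (ix x))\<bar> \<le> a / w" if "x \<in> V" for x
    proof -
      have "\<bar>b (z (ix x)) - b (z' (ix x))\<bar> \<le> \<bar>z (ix x) - z' (ix x)\<bar> / w"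
        unfolding b_def by (rule b_lip[OF w0])
      also have "\<dots> \<le> a / w" using enorm_coord[OF ix_lt[OF that], of "z - z'"] w0
        by (auto simp: a_def intro!: divide_right_mono)
      finally show ?thesis .
    qed
    have gj: "\<bar>g z j - g z' j\<bar> \<le> real n * (a / w)" for j
    proof -
      have "\<bar>g z j - g z' j\<bar> = \<bar>\<Sum>x\<in>V. (if jx (f x) = j then b (z (ix x)) - b (z' (ix x)) else 0)\<bar>"
        unfolding g_def sum_subtractf[symmetric] by (rule arg_cong[where f=abs], rule sum.cong) auto
      also have "\<dots> \<le> (\<Sum>x\<in>V. \<bar>if jx (f x) = j then b (z (ix x)) - b (z' (ix x)) else 0\<bar>)"
        by (rule sum_abs)
      also have "\<dots> \<le> (\<Sum>x\<in>V. a / w)"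
        by (rule sum_mono) (use coord w0 in \<open>auto simp: a_def enorm_def intro!: divide_nonneg_pos sum_nonneg\<close>)
      also have "\<dots> = real n * (a / w)" by (simp add: n_def)
      finally show ?thesis .
    qed
    have "enorm m (g z - g z') \<le> (\<Sum>j<m. \<bar>(g z - g z') j\<bar>)"
      unfolding enorm_def using L2_set_le_sum_abs[of "g z - g z'" "{..<m}"] by (simp add: L2_set_def)
    also have "\<dots> \<le> (\<Sum>j<m. real n * (a / w))" by (rule sum_mono) (use gj in simp)
    also have "\<dots> = \<omega> a" by (simp add: \<omega>_def L_def)
    finally show "enorm m (g z - g z') \<le> \<omega> (enorm n (z - z'))" by (simp add: a_def)
  qed
  define K where "K = X ` V"
  have cK: "compact K" unfolding K_def using fV by (simp add: finite_imp_compact)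
  have Kr: "K \<subseteq> rvec n" unfolding K_def X_def rvec_def by auto
  have approx: "\<exists>fh\<in>F n m c. \<forall>z\<in>K. enorm m (g z - fh z) \<le> r \<omega> K n m c" for c
    using UA cm hm Kr cK unfolding universal_approximator_def by blast
  define D where "D = (\<Sum>u\<in>V'. \<Sum>v\<in>V'. d' u v)"
  have d'0: "0 \<le> d' u v" if "u \<in> V'" "v \<in> V'" for u v
    using gd_nonneg[OF wg' cg' that] by (simp add: d'_def)
  have d'D: "d' u v \<le> D" if "u \<in> V'" "v \<in> V'" for u v
  proof -
    have "d' u v \<le> (\<Sum>v\<in>V'. d' u v)" by (rule member_le_sum) (use that fV' d'0 in auto)
    also have "\<dots> \<le> D" unfolding D_def by (rule member_le_sum) (use that fV' d'0 in \<open>auto intro: sum_nonneg\<close>)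
    finally show ?thesis .
  qed
  have D0: "D \<ge> 0" unfolding D_def using d'0 by (auto intro!: sum_nonneg)
  define \<delta> where "\<delta> = \<epsilon> / (2 * (D + 1))"
  have \<delta>0: "\<delta> > 0" using eps D0 by (simp add: \<delta>_def)
  have "(\<lambda>c. r \<omega> K n m c) \<longlonglongrightarrow> 0" using UA unfolding universal_approximator_def by blast
  then have "eventually (\<lambda>c. r \<omega> K n m c < \<delta>) sequentially" using \<delta>0 by (rule order_tendstoD(2))
  then obtain c0 where c0: "\<And>c. c \<ge> c0 \<Longrightarrow> r \<omega> K n m c < \<delta>" by (auto simp: eventually_sequentially)
  define c where "c = max c0 1"
  have c1: "c \<ge> 1" and rc: "r \<omega> K n m c < \<delta>" using c0[of c] by (auto simp: c_def)
  obtain fh where fh: "fh \<in> F n m c" and fhK: "\<forall>z\<in>K. enorm m (g z - fh z) \<le> r \<omega> K n m c"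
    using approx by blast
  have main: "wasserstein1 V' d' (\<lambda>u. proj_simplex m (fh (X y)) (jx u)) (dirac_mass (f y)) < \<epsilon>"
    if y: "y \<in> V" for y
  proof -
    define j0 where "j0 = jx (f y)"
    have fy: "f y \<in> V'" using fVV' y by auto
    have j0m: "j0 < m" using jx_lt[OF fy] by (simp add: j0_def)
    have m1: "m \<ge> 1" using j0m by simp
    define e where "e = (\<lambda>j. if j0 = j then 1 else (0::real))"
    have Xy: "X y (ix x) = d y x" if "x \<in> V" for x
      using ix_lt[OF that] ix_inv[OF that] by (simp add: X_def)
    have bd: "b (d y x) = (if x = y then 1 else 0)" if "x \<in> V" for x
    proof (cases "x = y")
      case True
      then show ?thesis using gd_refl[OF wg cg y] by (simp add: b_def d_def)
    next
      case False
      have "w \<le> d y x" using gd_pos[OF wg cg y that] False wle by (auto simp: d_def)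
      moreover have "0 \<le> d y x" using gd_nonneg[OF wg cg y that] by (simp add: d_def)
      ultimately have "1 - \<bar>d y x\<bar> / w \<le> 0" using w0 by (simp add: field_simps)
      then show ?thesis using False by (simp add: b_def)
    qed
    have ge: "g (X y) = e"
    proof
      fix j
      have "g (X y) j = (\<Sum>x\<in>V. if x = y then (if jx (f y) = j then 1 else 0) else 0)"
        unfolding g_def by (rule sum.cong) (auto simp: Xy bd)
      also have "\<dots> = e j" using fV y by (simp add: e_def j0_def)
      finally show "g (X y) j = e j" .
    qed
    have eS: "e \<in> std_simplex m"
      using j0m by (auto simp: std_simplex_def rvec_def e_def)
    define z where "z = fh (X y)"
    have "X y \<in> K" using y by (simp add: K_def)
    then have ez: "enorm m (e - z) \<le> r \<omega> K n m c" using fhK ge by (auto simp: z_def)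
    define p where "p = proj_simplex m z"
    have pS: "p \<in> std_simplex m" and pmin: "enorm m (z - p) \<le> enorm m (z - e)"
      using proj_simplex_prop[OF m1, of z] eS by (auto simp: p_def)
    have "1 - p j0 \<le> \<bar>(z - p) j0\<bar> + \<bar>(e - z) j0\<bar>" by (simp add: e_def)
    also have "\<dots> \<le> enorm m (z - p) + enorm m (e - z)"
      using enorm_coord[OF j0m, of "z - p"] enorm_coord[OF j0m, of "e - z"] by (intro add_mono) auto
    also have "\<dots> \<le> 2 * enorm m (e - z)" using pmin enorm_sym[of m z e] by simp
    finally have pj0: "1 - p j0 \<le> 2 * enorm m (e - z)" .
    define \<mu> where "\<mu> = (\<lambda>u. p (jx u))"
    have \<mu>0: "0 \<le> \<mu> u" if "u \<in> V'" for u
      using pS jx_lt[OF that] by (auto simp: std_simplex_def \<mu>_def)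
    have \<mu>1: "(\<Sum>u\<in>V'. \<mu> u) = 1"
    proof -
      have "(\<Sum>u\<in>V'. \<mu> u) = (\<Sum>i<m. \<mu> (enumV' i))"
        by (rule sum.reindex_bij_betw[symmetric]) (use bV' in \<open>simp add: m_def\<close>)
      also have "\<dots> = (\<Sum>i<m. p i)" by (rule sum.cong) (auto simp: \<mu>_def jx_enum)
      also have "\<dots> = 1" using pS by (simp add: std_simplex_def)
      finally show ?thesis .
    qed
    have \<mu>fy: "\<mu> (f y) = p j0" by (simp add: \<mu>_def j0_def)
    define \<pi> where "\<pi> = (\<lambda>u v. \<mu> u * dirac_mass (f y) v)"
    have dsum: "(\<Sum>v\<in>V'. dirac_mass (f y) v) = 1" using fV' fy by (simp add: dirac_mass_def)
    define cost where "cost = (\<Sum>u\<in>V'. \<Sum>v\<in>V'. \<pi> u v * d' u v)"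
    have inset: "cost \<in> {(\<Sum>u\<in>V'. \<Sum>v\<in>V'. \<pi> u v * d' u v) | \<pi>.
       (\<forall>u\<in>V'. \<forall>v\<in>V'. 0 \<le> \<pi> u v) \<and>
       (\<forall>u\<in>V'. (\<Sum>v\<in>V'. \<pi> u v) = \<mu> u) \<and> (\<forall>v\<in>V'. (\<Sum>u\<in>V'. \<pi> u v) = dirac_mass (f y) v)}"
    proof -
      have "\<forall>u\<in>V'. \<forall>v\<in>V'. 0 \<le> \<pi> u v" using \<mu>0 by (auto simp: \<pi>_def dirac_mass_def)
      moreover have "\<forall>u\<in>V'. (\<Sum>v\<in>V'. \<pi> u v) = \<mu> u"
        by (simp add: \<pi>_def sum_distrib_left[symmetric] dsum)
      moreover have "\<forall>v\<in>V'. (\<Sum>u\<in>V'. \<pi> u v) = dirac_mass (f y) v"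
        by (simp add: \<pi>_def sum_distrib_right[symmetric] \<mu>1)
      ultimately show ?thesis unfolding cost_def by blast
    qed
    have bdd: "bdd_below {(\<Sum>u\<in>V'. \<Sum>v\<in>V'. \<pi> u v * d' u v) | \<pi>.
       (\<forall>u\<in>V'. \<forall>v\<in>V'. 0 \<le> \<pi> u v) \<and>
       (\<forall>u\<in>V'. (\<Sum>v\<in>V'. \<pi> u v) = \<mu> u) \<and> (\<forall>v\<in>V'. (\<Sum>u\<in>V'. \<pi> u v) = dirac_mass (f y) v)}"
      by (rule bdd_belowI[where m=0]) (auto intro!: sum_nonneg mult_nonneg_nonneg d'0)
    have W1: "wasserstein1 V' d' \<mu> (dirac_mass (f y)) \<le> cost"
      unfolding wasserstein1_def by (rule cInf_lower[OF inset bdd])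
    have "cost = (\<Sum>u\<in>V'. \<mu> u * d' u (f y))"
      unfolding cost_def
    proof (rule sum.cong)
      fix u assume "u \<in> V'"
      have "(\<Sum>v\<in>V'. \<pi> u v * d' u v) = (\<Sum>v\<in>V'. if v = f y then \<mu> u * d' u (f y) else 0)"
        by (rule sum.cong) (auto simp: \<pi>_def dirac_mass_def)
      also have "\<dots> = \<mu> u * d' u (f y)" using fV' fy by simp
      finally show "(\<Sum>v\<in>V'. \<pi> u v * d' u v) = \<mu> u * d' u (f y)" .
    qed simp
    also have "\<dots> = \<mu> (f y) * d' (f y) (f y) + (\<Sum>u\<in>V' - {f y}. \<mu> u * d' u (f y))"
      using fV' fy by (simp add: sum.remove)
    also have "\<dots> = (\<Sum>u\<in>V' - {f y}. \<mu> u * d' u (f y))"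
      using gd_refl[OF wg' cg' fy] by (simp add: d'_def)
    also have "\<dots> \<le> (\<Sum>u\<in>V' - {f y}. \<mu> u * D)"
      by (rule sum_mono) (auto intro!: mult_left_mono d'D \<mu>0 fy)
    also have "\<dots> = D * (1 - \<mu> (f y))"
      using \<mu>1 fV' fy by (simp add: sum_distrib_right[symmetric] sum_distrib_left[symmetric] sum_diff1 algebra_simps)
    also have "\<dots> \<le> D * (2 * enorm m (e - z))" using pj0 D0 \<mu>fy by (simp add: mult_left_mono)
    also have "\<dots> \<le> (D + 1) * (2 * enorm m (e - z))"
      by (rule mult_right_mono) (auto simp: enorm_def intro!: sum_nonneg)
    also have "\<dots> < (D + 1) * (2 * \<delta>)" using ez rc D0 by (intro mult_strict_left_mono) auto
    also have "\<dots> = \<epsilon>" using D0 by (simp add: \<delta>_def field_simps)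
    finally have "cost < \<epsilon>" .
    then show ?thesis using W1 by (simp add: \<mu>_def p_def z_def)
  qed
  show ?thesis
    using c1 fh main unfolding n_def m_def jx_def d_def d'_def X_def by blast
qed

end
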